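(* Suppose $f$ is twice differentiable at every point of $\mathbb{R}^{n\times p}$. Then for every $X\in\mathcal{S}_{n,p}$ and every $D\in\mathcal{T}_X$, $$\langle D,\nabla^2h(X)[D]\rangle=\langle D,\nabla^2f(X)[D]-D\Phi(X^\top\nabla f(X))\rangle .$$
   Context: $f:\mathbb{R}^{n\times p}\to\mathbb{R}$ is differentiable with $f,\nabla f$ locally Lipschitz. $\langle A,B\rangle=\mathrm{tr}(A^\top B)$, $\Phi(M):=\frac12(M+M^\top)$. $\mathcal{S}_{n,p}=\{X:X^\top X=I_p\}$, and for $X\in\mathcal{S}_{n,p}$ the tangent space is $\mathcal{T}_X:=\{D\in\mathbb{R}^{n\times p}:\Phi(D^\top X)=0\}$. $\mathcal{A}(X):=\frac32I_p-\frac12X^\top X$, $h(X):=f(X\mathcal{A}(X))+\frac\beta4\|X^\top X-I_p\|_F^2$ with $\beta>0$. *)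

theory Defs
  imports "HOL-Analysis.Analysis"
begin

text \<open>Matrices in R^{n x p} are modelled as real^'p^'n. The inner product
  on this type is the Frobenius inner product tr(A^T B), and norm is the Frobenius norm.\<close>

definition Phi :: "real^'m^'m \<Rightarrow> real^'m^'m" where
  "Phi M = (1/2) *\<^sub>R (M + transpose M)"

definition Amap :: "real^'p^'n \<Rightarrow> real^'p^'p" where
  "Amap X = (3/2) *\<^sub>R mat 1 - (1/2) *\<^sub>R (transpose X ** X)"

definition hfun :: "(real^'p^'n \<Rightarrow> real) \<Rightarrow> real \<Rightarrow> real^'p^'n \<Rightarrow> real" where
  "hfun f \<beta> X = f (X ** Amap X) + (\<beta> / 4) * (norm (transpose X ** X - mat 1))\<^sup>2"

definition stiefel :: "(real^'p^'n) set" where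
  "stiefel = {X. transpose X ** X = mat 1}"

definition tangent :: "real^'p^'n \<Rightarrow> (real^'p^'n) set" where
  "tangent X = {D. Phi (transpose D ** X) = 0}"

definition grad :: "(real^'p^'n \<Rightarrow> real) \<Rightarrow> real^'p^'n \<Rightarrow> real^'p^'n" where
  "grad g X = (\<chi> i j. frechet_derivative g (at X) (\<chi> k l. if k = i \<and> l = j then 1 else 0))"

definition hess :: "(real^'p^'n \<Rightarrow> real) \<Rightarrow> real^'p^'n \<Rightarrow> real^'p^'n \<Rightarrow> real^'p^'n" where
  "hess g X = frechet_derivative (grad g) (at X)"

definition loc_lipschitz :: "('a::metric_space \<Rightarrow> 'b::metric_space) \<Rightarrow> bool" where
  "loc_lipschitz g \<longleftrightarrow> (\<forall>x. \<exists>r>0. \<exists>L. L-lipschitz_on (ball x r) g)"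

end

theory Submission
  imports Defs
begin

lemma mm_add_r: "((A::real^'m^'n) + B) ** C = A ** C + B ** C"
  by (vector matrix_matrix_mult_def sum.distrib[symmetric] field_simps)
lemma mm_diff_l: "(A::real^'m^'n) ** (B - C) = A ** B - A ** C"
  by (vector matrix_matrix_mult_def sum_subtractf[symmetric] field_simps)
lemma mm_diff_r: "((A::real^'m^'n) - B) ** C = A ** C - B ** C"
  by (vector matrix_matrix_mult_def sum_subtractf[symmetric] field_simps)
lemma mm_minus_l: "(- (A::real^'m^'n)) ** B = - (A ** B)"
  by (vector matrix_matrix_mult_def sum_negf[symmetric])
lemma mm_minus_r: "(A::real^'m^'n) ** (- B) = - (A ** B)"
  by (vector matrix_matrix_mult_def sum_negf[symmetric])

lemma mm_bilinear: "bounded_bilinear ((**) :: real^'m^'n \<Rightarrow> real^'p^'m \<Rightarrow> real^'p^'n)"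
proof -
  have "bilinear ((**) :: real^'m^'n \<Rightarrow> real^'p^'m \<Rightarrow> real^'p^'n)"
    unfolding bilinear_def
    by (auto intro!: linearI simp: matrix_add_ldistrib mm_add_r matrix_scalar_ac scalar_matrix_assoc)
  then show ?thesis using bilinear_conv_bounded_bilinear by blast
qed

lemma has_derivative_mm[derivative_intros]:
  fixes f :: "'a::real_normed_vector \<Rightarrow> real^'m^'n" and g :: "'a \<Rightarrow> real^'p^'m"
  assumes "(f has_derivative f') (at x within s)" "(g has_derivative g') (at x within s)"
  shows "((\<lambda>x. f x ** g x) has_derivative (\<lambda>h. f x ** g' h + f' h ** g x)) (at x within s)"
  using bounded_bilinear.FDERIV[OF mm_bilinear assms] .

lemma transpose_add: "transpose (A + B) = transpose A + transpose (B::real^'m^'n)"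
  by (simp add: transpose_def vec_eq_iff)
lemma transpose_diff: "transpose (A - B) = transpose A - transpose (B::real^'m^'n)"
  by (simp add: transpose_def vec_eq_iff)
lemma transpose_minus: "transpose (- A) = - transpose (A::real^'m^'n)"
  by (simp add: transpose_def vec_eq_iff)
lemma transpose_zero: "transpose (0::real^'m^'n) = 0"
  by (simp add: transpose_def vec_eq_iff)

lemma bl_transpose: "bounded_linear (transpose :: real^'m^'n \<Rightarrow> real^'n^'m)"
proof -
  have "linear (transpose :: real^'m^'n \<Rightarrow> real^'n^'m)"
    by (auto intro!: linearI simp: transpose_add transpose_scalar)
  then show ?thesis using linear_conv_bounded_linear by blast
qed

lemmas has_derivative_transpose[derivative_intros] = bounded_linear.has_derivative[OF bl_transpose]

lemma inner_transpose: "transpose (A::real^'p^'n) \<bullet> transpose B = A \<bullet> B"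
proof -
  have "transpose A \<bullet> transpose B = (\<Sum>j\<in>UNIV. \<Sum>i\<in>UNIV. A$i$j * B$i$j)"
    by (simp add: inner_vec_def transpose_def)
  also have "\<dots> = (\<Sum>i\<in>UNIV. \<Sum>j\<in>UNIV. A$i$j * B$i$j)" by (rule sum.swap)
  also have "\<dots> = A \<bullet> B" by (simp add: inner_vec_def)
  finally show ?thesis .
qed

lemma inner_mm1: "(A::real^'p^'n) \<bullet> (B ** C) = (transpose B ** A) \<bullet> C"
proof -
  have "A \<bullet> (B ** C) = (\<Sum>i\<in>UNIV. \<Sum>k\<in>UNIV. \<Sum>j\<in>UNIV. B$i$j * A$i$k * C$j$k)"
    by (simp add: inner_vec_def matrix_matrix_mult_def sum_distrib_left mult_ac)
  also have "\<dots> = (\<Sum>i\<in>UNIV. \<Sum>j\<in>UNIV. \<Sum>k\<in>UNIV. B$i$j * A$i$k * C$j$k)"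
    by (rule sum.cong[OF refl], rule sum.swap)
  also have "\<dots> = (\<Sum>j\<in>UNIV. \<Sum>i\<in>UNIV. \<Sum>k\<in>UNIV. B$i$j * A$i$k * C$j$k)"
    by (rule sum.swap)
  also have "\<dots> = (\<Sum>j\<in>UNIV. \<Sum>k\<in>UNIV. \<Sum>i\<in>UNIV. B$i$j * A$i$k * C$j$k)"
    by (rule sum.cong[OF refl], rule sum.swap)
  also have "\<dots> = (transpose B ** A) \<bullet> C"
    by (simp add: inner_vec_def matrix_matrix_mult_def transpose_def sum_distrib_left mult_ac)
  finally show ?thesis .
qed

lemma inner_mm2: "(A::real^'p^'n) \<bullet> (B ** C) = (A ** transpose C) \<bullet> B"
proof -
  have "A \<bullet> (B ** C) = transpose A \<bullet> transpose (B ** C)" by (simp add: inner_transpose)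
  also have "\<dots> = transpose A \<bullet> (transpose C ** transpose B)" by (simp add: matrix_transpose_mul)
  also have "\<dots> = (C ** transpose A) \<bullet> transpose B" by (simp add: inner_mm1)
  also have "\<dots> = transpose (A ** transpose C) \<bullet> transpose B" by (simp add: matrix_transpose_mul)
  also have "\<dots> = (A ** transpose C) \<bullet> B" by (simp add: inner_transpose)
  finally show ?thesis .
qed

definition Eij :: "'n \<Rightarrow> 'p \<Rightarrow> real^'p^'n" where
  "Eij i j = (\<chi> k l. if k = i \<and> l = j then 1 else 0)"

lemma sum2_delta: "(\<Sum>x\<in>UNIV. \<Sum>y\<in>UNIV. if (a::'a::finite) = x \<and> (b::'b::finite) = y then g x y else 0) = (g a b :: real)"
proof -
  have "\<And>x. (\<Sum>y\<in>UNIV. if a = x \<and> b = y then g x y else 0) = (if a = x then g x b else 0)"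
  proof -
    fix x
    show "(\<Sum>y\<in>UNIV. if a = x \<and> b = y then g x y else 0) = (if a = x then g x b else 0)"
      by (cases "a = x") (simp_all add: sum.delta')
  qed
  then show ?thesis by (simp add: sum.delta)
qed

lemma sum2_delta': "(\<Sum>x\<in>UNIV. \<Sum>y\<in>UNIV. if x = (a::'a::finite) \<and> y = (b::'b::finite) then g x y else 0) = (g a b :: real)"
  using sum2_delta[of a b g] by (simp add: eq_commute)

lemma expand_E: "(D::real^'p^'n) = (\<Sum>i\<in>UNIV. \<Sum>j\<in>UNIV. D$i$j *\<^sub>R Eij i j)"
  by (simp add: vec_eq_iff sum_component Eij_def if_distrib sum2_delta cong: if_cong)

lemma lin_expand:
  fixes L :: "real^'p^'n \<Rightarrow> real"
  assumes "linear L"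
  shows "L D = (\<Sum>i\<in>UNIV. \<Sum>j\<in>UNIV. D$i$j * L (Eij i j))"
proof -
  have "L D = L (\<Sum>i\<in>UNIV. \<Sum>j\<in>UNIV. D$i$j *\<^sub>R Eij i j)" by (subst expand_E[of D], rule refl)
  also have "\<dots> = (\<Sum>i\<in>UNIV. \<Sum>j\<in>UNIV. D$i$j * L (Eij i j))"
    using assms by (simp add: linear_sum linear_scale)
  finally show ?thesis .
qed

lemma inner_E: "(G::real^'p^'n) \<bullet> Eij i j = G$i$j"
  by (simp add: inner_vec_def Eij_def if_distrib sum2_delta' cong: if_cong)

lemma grad_has_derivative:
  fixes f :: "real^'p^'n \<Rightarrow> real"
  assumes "f differentiable (at X)"
  shows "(f has_derivative (\<lambda>D. grad f X \<bullet> D)) (at X)"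
proof -
  let ?L = "frechet_derivative f (at X)"
  have d: "(f has_derivative ?L) (at X)" using assms frechet_derivative_works by blast
  have lin: "linear ?L" using has_derivative_linear[OF d] .
  have "?L = (\<lambda>D. grad f X \<bullet> D)"
  proof
    fix D
    show "?L D = grad f X \<bullet> D"
      unfolding lin_expand[OF lin, of D]
      by (simp add: inner_vec_def grad_def Eij_def mult.commute)
  qed
  with d show ?thesis by simp
qed

lemma grad_eq:
  fixes g :: "real^'p^'n \<Rightarrow> real"
  assumes "(g has_derivative (\<lambda>D. G \<bullet> D)) (at X)"
  shows "grad g X = G"
proof -
  have "frechet_derivative g (at X) = (\<lambda>D. G \<bullet> D)" using frechet_derivative_at[OF assms] by simp
  then show ?thesis unfolding grad_def using inner_E[of G] by (simp add: vec_eq_iff Eij_def)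
qed

definition gmap :: "real^'p^'n \<Rightarrow> real^'p^'n" where
  "gmap Y = Y ** Amap Y"
definition dAm :: "real^'p^'n \<Rightarrow> real^'p^'n \<Rightarrow> real^'p^'p" where
  "dAm Y D = -(1/2) *\<^sub>R (transpose D ** Y + transpose Y ** D)"
definition Mm :: "real^'p^'n \<Rightarrow> real^'p^'p" where
  "Mm Y = transpose Y ** Y - mat 1"

lemma Amap_deriv: "(Amap has_derivative dAm Y) (at Y)"
  unfolding Amap_def[abs_def] dAm_def[abs_def]
  apply (rule has_derivative_eq_rhs)
   apply (rule has_derivative_diff)
  apply (rule has_derivative_const)
  apply (rule has_derivative_scaleR_right)
  apply (rule has_derivative_mm)
  apply (rule has_derivative_transpose)
  apply (rule has_derivative_ident)
  apply (rule has_derivative_ident)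
  apply (rule ext)
  apply (simp add: algebra_simps)
  done

lemma gmap_deriv: "(gmap has_derivative (\<lambda>D. D ** Amap Y + Y ** dAm Y D)) (at Y)"
  unfolding gmap_def[abs_def]
  apply (rule has_derivative_eq_rhs)
   apply (rule has_derivative_mm)
    apply (rule has_derivative_ident)
   apply (rule Amap_deriv)
  apply (rule ext)
  apply (simp add: algebra_simps)
  done

lemma Mm_deriv: "(Mm has_derivative (\<lambda>D. transpose Y ** D + transpose D ** Y)) (at Y)"
  unfolding Mm_def[abs_def]
  apply (rule has_derivative_eq_rhs)
   apply (rule has_derivative_diff)
  apply (rule has_derivative_mm)
  apply (rule has_derivative_transpose)
  apply (rule has_derivative_ident)
  apply (rule has_derivative_ident)
  apply (rule has_derivative_const)
  apply (rule ext)
  apply (simp add: algebra_simps)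
  done

lemma Amap_sym: "transpose (Amap Y) = Amap Y"
  by (simp add: Amap_def transpose_diff transpose_scalar matrix_transpose_mul)

lemma K1: "(P::real^'p^'p) \<bullet> (transpose (D::real^'p^'n) ** Y) = (Y ** transpose P) \<bullet> D"
proof -
  have "P \<bullet> (transpose D ** Y) = (P ** transpose Y) \<bullet> transpose D" by (rule inner_mm2)
  also have "\<dots> = transpose (transpose (P ** transpose Y)) \<bullet> transpose D" by simp
  also have "\<dots> = transpose (P ** transpose Y) \<bullet> D" by (rule inner_transpose)
  also have "\<dots> = (Y ** transpose P) \<bullet> D" by (simp add: matrix_transpose_mul)
  finally show ?thesis .
qed

lemma K2: "(P::real^'p^'p) \<bullet> (transpose (Y::real^'p^'n) ** D) = (Y ** P) \<bullet> D"
  using inner_mm1[of P "transpose Y" D] by simp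

lemma skew_zero:
  fixes S :: "real^'p^'p" and Q R :: "real^'p^'n"
  assumes "transpose S = - S"
  shows "S \<bullet> (transpose Q ** R) + S \<bullet> (transpose R ** Q) = 0"
proof -
  have 1: "S \<bullet> (transpose Q ** R) = (Q ** S) \<bullet> R" using inner_mm1[of S "transpose Q" R] by simp
  have "S \<bullet> (transpose R ** Q) = (R ** S) \<bullet> Q" using inner_mm1[of S "transpose R" Q] by simp
  also have "\<dots> = Q \<bullet> (R ** S)" by (simp add: inner_commute)
  also have "\<dots> = (Q ** transpose S) \<bullet> R" by (rule inner_mm2)
  also have "\<dots> = - ((Q ** S) \<bullet> R)" by (simp add: assms mm_minus_r)
  finally show ?thesis using 1 by simp
qed

definition GrF :: "(real^'p^'n \<Rightarrow> real^'p^'n) \<Rightarrow> real \<Rightarrow> real^'p^'n \<Rightarrow> real^'p^'n" where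
  "GrF Gf \<beta> Y = Gf Y ** Amap Y - (1/2) *\<^sub>R (Y ** (transpose (Gf Y) ** Y + transpose Y ** Gf Y))
      + (\<beta>/2) *\<^sub>R (Y ** transpose (Mm Y) + Y ** Mm Y)"

lemma h_deriv:
  fixes f :: "real^'p^'n \<Rightarrow> real"
  assumes diff: "\<forall>X. f differentiable (at X)"
  shows "(hfun f \<beta> has_derivative (\<lambda>D. GrF (\<lambda>Y. grad f (gmap Y)) \<beta> Y \<bullet> D)) (at Y)"
proof -
  have hf: "hfun f \<beta> = (\<lambda>Y. f (gmap Y) + (\<beta>/4) * (Mm Y \<bullet> Mm Y))"
    by (rule ext) (simp add: hfun_def gmap_def Mm_def power2_norm_eq_inner)
  let ?G = "grad f (gmap Y)"
  have d1: "((\<lambda>Y. f (gmap Y)) has_derivative (\<lambda>D. ?G \<bullet> (D ** Amap Y + Y ** dAm Y D))) (at Y)"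
    using has_derivative_compose[OF gmap_deriv grad_has_derivative[OF diff[rule_format]]] .
  have d2: "((\<lambda>Y. (\<beta>/4) * (Mm Y \<bullet> Mm Y)) has_derivative
     (\<lambda>D. (\<beta>/4) * (Mm Y \<bullet> (transpose Y ** D + transpose D ** Y) + (transpose Y ** D + transpose D ** Y) \<bullet> Mm Y))) (at Y)"
    by (rule has_derivative_mult_right, rule has_derivative_inner, rule Mm_deriv, rule Mm_deriv)
  have eq: "?G \<bullet> (D ** Amap Y + Y ** dAm Y D) + (\<beta>/4) * (Mm Y \<bullet> (transpose Y ** D + transpose D ** Y) + (transpose Y ** D + transpose D ** Y) \<bullet> Mm Y)
     = GrF (\<lambda>Y. grad f (gmap Y)) \<beta> Y \<bullet> D" for D
  proof -
    have a: "?G \<bullet> (D ** Amap Y) = (?G ** Amap Y) \<bullet> D"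
      using inner_mm2[of ?G D "Amap Y"] by (simp add: Amap_sym)
    have b: "?G \<bullet> (Y ** dAm Y D) = (- (1/2) *\<^sub>R (Y ** (transpose ?G ** Y + transpose Y ** ?G))) \<bullet> D"
    proof -
      have "?G \<bullet> (Y ** dAm Y D) = (transpose Y ** ?G) \<bullet> dAm Y D" by (rule inner_mm1)
      also have "\<dots> = -(1/2) * ((transpose Y ** ?G) \<bullet> (transpose D ** Y) + (transpose Y ** ?G) \<bullet> (transpose Y ** D))"
        by (simp add: dAm_def inner_add_right)
      also have "\<dots> = -(1/2) * ((Y ** (transpose ?G ** Y)) \<bullet> D + (Y ** (transpose Y ** ?G)) \<bullet> D)"
      proof -
        have "(transpose Y ** ?G) \<bullet> (transpose D ** Y) = (Y ** (transpose ?G ** Y)) \<bullet> D"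
          using K1[of "transpose Y ** ?G" D Y] by (simp add: matrix_transpose_mul)
        moreover have "(transpose Y ** ?G) \<bullet> (transpose Y ** D) = (Y ** (transpose Y ** ?G)) \<bullet> D"
          by (rule K2)
        ultimately show ?thesis by simp
      qed
      also have "\<dots> = (- (1/2) *\<^sub>R (Y ** (transpose ?G ** Y + transpose Y ** ?G))) \<bullet> D"
        by (simp add: matrix_add_ldistrib inner_add_left)
      finally show ?thesis .
    qed
    have c: "Mm Y \<bullet> (transpose Y ** D + transpose D ** Y) = (Y ** transpose (Mm Y) + Y ** Mm Y) \<bullet> D"
      by (simp only: inner_add_right inner_add_left K1[of "Mm Y" D Y] K2[of "Mm Y" Y D] add.commute)
    have c2: "(transpose Y ** D + transpose D ** Y) \<bullet> Mm Y = (Y ** transpose (Mm Y) + Y ** Mm Y) \<bullet> D"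
      using c by (simp add: inner_commute)
    show ?thesis
      unfolding inner_add_right[of ?G] a b c c2 GrF_def
      by (simp add: inner_add_left inner_diff_left algebra_simps)
  qed
  show ?thesis
    unfolding hf
    apply (rule has_derivative_eq_rhs)
     apply (rule has_derivative_add[OF d1 d2])
    apply (rule ext)
    apply (rule eq)
    done
qed

lemma GrF_deriv:
  assumes "(Gf has_derivative G') (at X)"
  shows "(GrF Gf \<beta> has_derivative (\<lambda>D. G' D ** Amap X + Gf X ** dAm X D
     - (1/2) *\<^sub>R (X ** (transpose (Gf X) ** D + transpose (G' D) ** X + (transpose X ** G' D + transpose D ** Gf X))
                     + D ** (transpose (Gf X) ** X + transpose X ** Gf X))
     + (\<beta>/2) *\<^sub>R (X ** transpose (transpose X ** D + transpose D ** X) + D ** transpose (Mm X)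
                     + (X ** (transpose X ** D + transpose D ** X) + D ** Mm X)))) (at X)"
  unfolding GrF_def[abs_def]
  apply (rule has_derivative_eq_rhs)
   apply (rule has_derivative_add)
    apply (rule has_derivative_diff)
     apply (rule has_derivative_mm, rule assms, rule Amap_deriv)
    apply (rule has_derivative_scaleR_right, rule has_derivative_mm, rule has_derivative_ident)
    apply (rule has_derivative_add)
     apply (rule has_derivative_mm, rule has_derivative_transpose, rule assms, rule has_derivative_ident)
    apply (rule has_derivative_mm, rule has_derivative_transpose, rule has_derivative_ident, rule assms)
   apply (rule has_derivative_scaleR_right, rule has_derivative_add)
    apply (rule has_derivative_mm, rule has_derivative_ident, rule has_derivative_transpose, rule Mm_deriv)
   apply (rule has_derivative_mm, rule has_derivative_ident, rule Mm_deriv)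
  apply (rule ext)
  apply (simp add: algebra_simps)
  done

theorem mainTheorem10:
  fixes f :: "real^'p^'n \<Rightarrow> real" and \<beta> :: real
  assumes "\<beta> > 0"
    and "\<forall>X. f differentiable (at X)"
    and "loc_lipschitz f"
    and "loc_lipschitz (grad f)"
    and "\<forall>X. grad f differentiable (at X)"
  shows "\<forall>X \<in> stiefel. \<forall>D \<in> tangent X.
           D \<bullet> hess (hfun f \<beta>) X D
           = D \<bullet> (hess f X D - D ** Phi (transpose X ** grad f X))"
proof (intro ballI)
  fix X D :: "real^'p^'n"
  assume Xs: "X \<in> stiefel" and Dt: "D \<in> tangent X"
  have XX: "transpose X ** X = mat 1" using Xs by (simp add: stiefel_def)
  have AX: "Amap X = mat 1"
  proof -
    have "Amap X = (3/2) *\<^sub>R mat 1 - (1/2) *\<^sub>R mat 1" by (simp add: Amap_def XX)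
    also have "\<dots> = ((3/2) - (1/2)) *\<^sub>R (mat 1 :: real^'p^'p)" by (rule scaleR_diff_left[symmetric])
    finally show ?thesis by simp
  qed
  have gX: "gmap X = X" by (simp add: gmap_def AX)
  have MX: "Mm X = 0" by (simp add: Mm_def XX)
  have skew0: "transpose D ** X + transpose X ** D = 0"
  proof -
    have "(1/2::real) *\<^sub>R (transpose D ** X + transpose (transpose D ** X)) = 0"
      using Dt by (simp add: tangent_def Phi_def)
    then show ?thesis by (simp add: matrix_transpose_mul)
  qed
  have dAX: "dAm X D = 0" by (simp add: dAm_def skew0)
  have dM: "transpose X ** D + transpose D ** X = 0" using skew0 by (simp add: add.commute)
  have dg: "D ** Amap X + X ** dAm X D = D" by (simp add: AX dAX)
  have gradh: "grad (hfun f \<beta>) = GrF (\<lambda>Y. grad f (gmap Y)) \<beta>"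
    by (rule ext, rule grad_eq, rule h_deriv[OF assms(2)])
  have dGf: "(grad f has_derivative hess f X) (at (gmap X))"
    unfolding gX hess_def using assms(5) frechet_derivative_works by blast
  have dG: "((\<lambda>Y. grad f (gmap Y)) has_derivative (\<lambda>E. hess f X (E ** Amap X + X ** dAm X E))) (at X)"
    using has_derivative_compose[OF gmap_deriv[of X] dGf] .
  note dGr = GrF_deriv[OF dG, of \<beta>]
  let ?G = "grad f X" and ?H = "hess f X D"
  have hessh: "hess (hfun f \<beta>) X D = ?H - (1/2) *\<^sub>R (X ** (transpose ?G ** D + transpose ?H ** X + (transpose X ** ?H + transpose D ** ?G))
                     + D ** (transpose ?G ** X + transpose X ** ?G))"
    unfolding hess_def gradh frechet_derivative_at[OF dGr, symmetric]
    by (simp add: dg gX AX dAX MX dM transpose_zero)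
  define S where "S = transpose X ** D"
  have St: "transpose S = - S" using skew0 by (simp add: S_def matrix_transpose_mul eq_neg_iff_add_eq_0)
  have z: "D \<bullet> (X ** (transpose ?G ** D + transpose ?H ** X + (transpose X ** ?H + transpose D ** ?G))) = 0"
  proof -
    have "D \<bullet> (X ** (transpose ?G ** D + transpose ?H ** X + (transpose X ** ?H + transpose D ** ?G)))
       = (S \<bullet> (transpose ?H ** X) + S \<bullet> (transpose X ** ?H)) + (S \<bullet> (transpose ?G ** D) + S \<bullet> (transpose D ** ?G))"
      unfolding inner_mm1[of D X] S_def[symmetric] by (simp add: inner_add_right algebra_simps)
    also have "\<dots> = 0" using skew_zero[OF St, of ?H X] skew_zero[OF St, of ?G D] by simp
    finally show ?thesis .
  qed
  have P: "D ** Phi (transpose X ** ?G) = (1/2) *\<^sub>R (D ** (transpose ?G ** X + transpose X ** ?G))"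
    by (simp add: Phi_def matrix_scalar_ac matrix_transpose_mul add.commute scalar_matrix_assoc[symmetric])
  show "D \<bullet> hess (hfun f \<beta>) X D = D \<bullet> (hess f X D - D ** Phi (transpose X ** grad f X))"
    unfolding hessh P using z by (simp add: inner_diff_right inner_add_right)
qed

end
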